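(* Setting: $n$ agents on a connected, undirected weighted graph with Laplacian $L_n$; $L=L_n\otimes I_m$. For each $i$, $\Omega_i\subset\mathbb R^{q_i}$ is closed and convex, $f^i$ is strictly convex on an open set containing $\Omega_i$, $W_i\in\mathbb R^{m\times q_i}$, $d_i\in\mathbb R^m$ with $\sum_id_i=d_0$; $\Omega=\prod_i\Omega_i$, $f(x)=\sum_if^i(x_i)$, $W=[W_1,\dots,W_n]$, $\overline W=\mathrm{diag}\{W_1,\dots,W_n\}$, $d=[d_1^{\rm T},\dots,d_n^{\rm T}]^{\rm T}$; Slater's condition holds. Let $$\mathcal F(x,\lambda,z)=\Big\{\big(p,\ d-\overline Wx-L\lambda-Lz-\overline Wp,\ L\lambda\big):\ p=P_\Omega[x-g+\overline W^{\rm T}\lambda]-x,\ g\in\partial f(x)\Big\}$$ and assume $\mathcal F(x,\lambda,z)$ is convex for all $(x,\lambda,z)\in\Omega\times\mathbb R^{nm}\times\mathbb R^{nm}$. Let $(x^*,\lambda^*,z^* )\in\Omega\times\mathbb R^{nm}\times\mathbb R^{nm}$ be an equilibrium ($0\in\mathcal F(x^*,\lambda^*,z^* )$) and $$V(x,\lambda,z)=f(x)-f(x^* )+(\lambda^* )^{\rm T}(d-\overline Wx)+\tfrac12\|x-x^*\|^2+\tfrac12\|\lambda-\lambda^*\|^2+\tfrac12\|z-z^*\|^2.$$ If $a\in\mathcal L_{\mathcal F}V(x,\lambda,z)$, then there exist $g(x)\in\partial f(x)$ and $g(x^* )\in\partial f(x^* )$ such that $$a\le-\|p\|^2-(x-x^*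 )^{\rm T}(g(x)-g(x^* ))-\lambda^{\rm T}L\lambda\le0,\qquad p=P_\Omega[x-g(x)+\overline W^{\rm T}\lambda]-x.$$
   Context: $\partial f$ is the convex subdifferential; $P_\Omega$ the Euclidean projection onto $\Omega$. For a locally Lipschitz $V$ with Clarke generalized gradient $\partial V$, the set-valued Lie derivative is $\mathcal L_{\mathcal F}V(\xi)=\{a\in\mathbb R:\ \exists v\in\mathcal F(\xi)\text{ with } p^{\rm T}v=a\ \forall p\in\partial V(\xi)\}$. *)

theory Defs
  imports "HOL-Analysis.Analysis"
begin

definition strictly_convex_on :: "'a::real_vector set \<Rightarrow> ('a \<Rightarrow> real) \<Rightarrow> bool" where
  "strictly_convex_on A f \<longleftrightarrow> convex A \<and>
     (\<forall>x\<in>A. \<forall>y\<in>A. x \<noteq> y \<longrightarrow>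
        (\<forall>u::real. 0 < u \<and> u < 1 \<longrightarrow> f ((1 - u) *\<^sub>R x + u *\<^sub>R y) < (1 - u) * f x + u * f y))"

text \<open>Convex subdifferential of f (convex on its effective domain D, f = +infinity outside D).\<close>
definition convex_subdiff :: "'a::real_inner set \<Rightarrow> ('a \<Rightarrow> real) \<Rightarrow> 'a \<Rightarrow> 'a set" where
  "convex_subdiff D f x = {g. \<forall>y\<in>D. f x + inner g (y - x) \<le> f y}"

definition clarke_dir_deriv :: "('a::real_normed_vector \<Rightarrow> real) \<Rightarrow> 'a \<Rightarrow> 'a \<Rightarrow> ereal" where
  "clarke_dir_deriv V \<xi> v =
     Limsup (nhds \<xi> \<times>\<^sub>F at_right (0::real)) (\<lambda>(y, t). ereal ((V (y + t *\<^sub>R v) - V y) / t))"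

definition clarke_grad :: "('a::real_inner \<Rightarrow> real) \<Rightarrow> 'a \<Rightarrow> 'a set" where
  "clarke_grad V \<xi> = {\<zeta>. \<forall>v. ereal (inner \<zeta> v) \<le> clarke_dir_deriv V \<xi> v}"

definition set_lie_deriv :: "('a::real_inner \<Rightarrow> 'a set) \<Rightarrow> ('a \<Rightarrow> real) \<Rightarrow> 'a \<Rightarrow> real set" where
  "set_lie_deriv F V \<xi> = {a. \<exists>v\<in>F \<xi>. \<forall>p\<in>clarke_grad V \<xi>. inner p v = a}"

definition laplacian :: "('n::finite \<Rightarrow> 'n \<Rightarrow> real) \<Rightarrow> real^'n^'n" where
  "laplacian A = (\<chi> i j. if i = j then (\<Sum>k\<in>UNIV - {i}. A i k) else - A i j)"

definition connected_weighted_graph :: "('n \<Rightarrow> 'n \<Rightarrow> real) \<Rightarrow> bool" where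
  "connected_weighted_graph A \<longleftrightarrow> (\<forall>i j. (i, j) \<in> {(i, j). A i j > 0}\<^sup>*)"

text \<open>(L_n \<otimes> I_m) applied to a stacked vector lambda = [lambda_1; ...; lambda_n], lambda_i in R^m.\<close>
definition kron_I :: "real^'n^'n \<Rightarrow> real^'m^'n \<Rightarrow> real^'m^'n" where
  "kron_I Lg lam = (\<chi> i. \<Sum>j\<in>UNIV. (Lg $ i $ j) *\<^sub>R (lam $ j))"

text \<open>Stacked decision vector x in R^(q_1+...+q_n): coordinate k belongs to agent blk k.
  blk_proj blk i x keeps exactly the block x_i (other coordinates set to 0);
  block_space blk i is the copy of R^(q_i) inside the stacked space.\<close>
definition blk_proj :: "('k \<Rightarrow> 'n) \<Rightarrow> 'n \<Rightarrow> real^'k \<Rightarrow> real^'k" where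
  "blk_proj blk i x = (\<chi> k. if blk k = i then x $ k else 0)"

definition block_space :: "('k \<Rightarrow> 'n) \<Rightarrow> 'n \<Rightarrow> (real^'k) set" where
  "block_space blk i = {x. \<forall>k. blk k \<noteq> i \<longrightarrow> x $ k = 0}"

text \<open>W = [W_1,...,W_n] given by its columns Wc k in R^m (column k belongs to W_(blk k)).
  Wx = sum_i W_i x_i; Wbar = diag(W_1,...,W_n).\<close>
definition W_mul :: "('k::finite \<Rightarrow> real^'m) \<Rightarrow> real^'k \<Rightarrow> real^'m" where
  "W_mul Wc x = (\<Sum>k\<in>UNIV. (x $ k) *\<^sub>R Wc k)"

definition Wbar_mul :: "('k::finite \<Rightarrow> 'n) \<Rightarrow> ('k \<Rightarrow> real^'m) \<Rightarrow> real^'k \<Rightarrow> real^'m^'n" where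
  "Wbar_mul blk Wc x = (\<chi> i. \<Sum>k\<in>{k. blk k = i}. (x $ k) *\<^sub>R Wc k)"

definition WbarT_mul :: "('k \<Rightarrow> 'n) \<Rightarrow> ('k \<Rightarrow> real^'m) \<Rightarrow> real^'m^'n \<Rightarrow> real^'k" where
  "WbarT_mul blk Wc lam = (\<chi> k. inner (Wc k) (lam $ blk k))"

end

theory Submission
  imports Defs
begin


lemma clarke_lower:
  fixes V :: "'a::real_normed_vector \<Rightarrow> real"
  assumes ev: "\<forall>\<^sub>F t in at_right (0::real). c \<le> (V (\<xi> + t *\<^sub>R v) - V \<xi>) / t"
  shows "ereal c \<le> clarke_dir_deriv V \<xi> v"
  unfolding clarke_dir_deriv_def Limsup_def
proof (rule INF_greatest)
  fix P assume "P \<in> {P. eventually P (nhds \<xi> \<times>\<^sub>F at_right (0::real))}"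
  then obtain Pf Pg where Pf: "eventually Pf (nhds \<xi>)" and Pg: "eventually Pg (at_right (0::real))"
    and PP: "\<forall>x y. Pf x \<longrightarrow> Pg y \<longrightarrow> P (x, y)"
    unfolding eventually_prod_filter by auto
  have "Pf \<xi>" using Pf by (simp add: eventually_nhds) (metis)
  moreover obtain t where "Pg t" "c \<le> (V (\<xi> + t *\<^sub>R v) - V \<xi>) / t"
    using eventually_happens[OF eventually_conj[OF Pg ev]] by auto
  ultimately show "ereal c \<le> (SUP x\<in>{x. P x}. (\<lambda>(y, t). ereal ((V (y + t *\<^sub>R v) - V y) / t)) x)"
    using PP by (intro SUP_upper2[of "(\<xi>, t)"]) auto
qed



lemma Wbar_adj:
  fixes blk :: "'k::finite \<Rightarrow> 'n::finite" and Wc :: "'k \<Rightarrow> real^'m::finite"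
  shows "inner (Wbar_mul blk Wc y) lam = inner y (WbarT_mul blk Wc lam)"
proof -
  have "inner (Wbar_mul blk Wc y) lam = (\<Sum>i\<in>UNIV. inner (Wbar_mul blk Wc y $ i) (lam $ i))"
    by (rule inner_vec_def)
  also have "\<dots> = (\<Sum>i\<in>UNIV. \<Sum>k\<in>{k. blk k = i}. y $ k * inner (Wc k) (lam $ i))"
    by (simp add: Wbar_mul_def inner_sum_left)
  also have "\<dots> = (\<Sum>i\<in>UNIV. \<Sum>k\<in>UNIV. if blk k = i then y $ k * inner (Wc k) (lam $ blk k) else 0)"
  proof (rule sum.cong[OF refl])
    fix i assume "i \<in> (UNIV::'n set)"
    have "(\<Sum>k\<in>UNIV. if blk k = i then y $ k * inner (Wc k) (lam $ blk k) else 0)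
       = (\<Sum>k\<in>UNIV. if blk k = i then y $ k * inner (Wc k) (lam $ i) else 0)"
      by (intro sum.cong refl) auto
    also have "\<dots> = (\<Sum>k\<in>{k. blk k = i}. y $ k * inner (Wc k) (lam $ i))"
      by (simp add: sum.If_cases)
    finally show "(\<Sum>k\<in>{k. blk k = i}. y $ k * inner (Wc k) (lam $ i)) = (\<Sum>k\<in>UNIV. if blk k = i then y $ k * inner (Wc k) (lam $ blk k) else 0)"
      by simp
  qed
  also have "\<dots> = (\<Sum>k\<in>UNIV. \<Sum>i\<in>UNIV. if blk k = i then y $ k * inner (Wc k) (lam $ blk k) else 0)"
    by (rule sum.swap)
  also have "\<dots> = (\<Sum>k\<in>UNIV. y $ k * WbarT_mul blk Wc lam $ k)"
    by (simp add: WbarT_mul_def)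
  also have "\<dots> = inner y (WbarT_mul blk Wc lam)"
    by (simp add: inner_vec_def)
  finally show ?thesis .
qed

lemma kron_inner:
  fixes Lg :: "real^'n::finite^'n" and a b :: "real^'m::finite^'n"
  shows "inner a (kron_I Lg b) = (\<Sum>i\<in>UNIV. \<Sum>j\<in>UNIV. Lg $ i $ j * inner (a $ i) (b $ j))"
  by (subst inner_vec_def) (simp add: kron_I_def inner_sum_right)

lemma lap_entry: "laplacian A $ i $ j = (if i = j then (\<Sum>k\<in>UNIV. A i k) else 0) - A i j"
  by (cases "i = j") (simp_all add: laplacian_def sum_diff1)

lemma lap_sym:
  fixes A :: "'n::finite \<Rightarrow> 'n \<Rightarrow> real" and a b :: "real^'m::finite^'n"
  assumes sym: "\<And>i j. A i j = A j i"
  shows "inner a (kron_I (laplacian A) b) = inner b (kron_I (laplacian A) a)"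
proof -
  have s: "laplacian A $ i $ j = laplacian A $ j $ i" for i j
    using sym by (simp add: lap_entry)
  show ?thesis unfolding kron_inner
    by (subst sum.swap) (simp add: s inner_commute)
qed

lemma lap_psd:
  fixes A :: "'n::finite \<Rightarrow> 'n \<Rightarrow> real" and a :: "real^'m::finite^'n"
  assumes sym: "\<And>i j. A i j = A j i" and nn: "\<And>i j. 0 \<le> A i j"
  shows "0 \<le> inner a (kron_I (laplacian A) a)"
proof -
  have "inner a (kron_I (laplacian A) a) =
     (\<Sum>i\<in>UNIV. \<Sum>j\<in>UNIV. (if i = j then (\<Sum>k\<in>UNIV. A i k) else 0) * inner (a $ i) (a $ j))
     - (\<Sum>i\<in>UNIV. \<Sum>j\<in>UNIV. A i j * inner (a $ i) (a $ j))"
    unfolding kron_inner lap_entry by (simp add: left_diff_distrib sum_subtractf)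
  also have "(\<Sum>i\<in>UNIV. \<Sum>j\<in>UNIV. (if i = j then (\<Sum>k\<in>UNIV. A i k) else 0) * inner (a $ i) (a $ j))
      = (\<Sum>i\<in>UNIV. \<Sum>j\<in>UNIV. A i j * inner (a $ i) (a $ i))"
  proof (rule sum.cong[OF refl])
    fix i :: 'n assume "i \<in> UNIV"
    have "(\<Sum>j\<in>UNIV. (if i = j then (\<Sum>k\<in>UNIV. A i k) else 0) * inner (a $ i) (a $ j))
       = (\<Sum>j\<in>UNIV. if i = j then (\<Sum>k\<in>UNIV. A i k) * inner (a $ i) (a $ j) else 0)"
      by (intro sum.cong refl) auto
    also have "\<dots> = (\<Sum>k\<in>UNIV. A i k) * inner (a $ i) (a $ i)" by simp
    finally show "(\<Sum>j\<in>UNIV. (if i = j then (\<Sum>k\<in>UNIV. A i k) else 0) * inner (a $ i) (a $ j))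
      = (\<Sum>j\<in>UNIV. A i j * inner (a $ i) (a $ i))" by (simp add: sum_distrib_right)
  qed
  also have "(\<Sum>i\<in>UNIV. \<Sum>j\<in>UNIV. A i j * inner (a $ i) (a $ i)) = (1/2) * (\<Sum>i\<in>UNIV. \<Sum>j\<in>UNIV. A i j * inner (a $ i) (a $ i))
       + (1/2) * (\<Sum>i\<in>UNIV. \<Sum>j\<in>UNIV. A i j * inner (a $ j) (a $ j))"
    by (subst (2) sum.swap) (simp add: sym)
  finally have "inner a (kron_I (laplacian A) a) =
      (1/2) * (\<Sum>i\<in>UNIV. \<Sum>j\<in>UNIV. A i j * inner (a $ i - a $ j) (a $ i - a $ j))"
    by (simp add: inner_diff algebra_simps sum.distrib sum_subtractf sum_distrib_left inner_commute)
  also have "\<dots> \<ge> 0"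
    using nn by (intro mult_nonneg_nonneg sum_nonneg) auto
  finally show ?thesis .
qed


lemma blk_proj_linear: "linear (blk_proj blk i :: real^'k::finite \<Rightarrow> real^'k)"
  by (auto simp: linear_iff blk_proj_def vec_eq_iff)

lemma blk_proj_cont: "continuous (at y) (blk_proj blk i :: real^'k::finite \<Rightarrow> real^'k)"
  by (rule linear_continuous_at) (simp add: linear_conv_bounded_linear[symmetric] blk_proj_linear)

lemma sq_norm_step:
  fixes e w :: "'a::real_inner"
  shows "t * inner e w \<le> (1/2) * (norm (e + t *\<^sub>R w))\<^sup>2 - (1/2) * (norm e)\<^sup>2"
proof -
  have "(norm (e + t *\<^sub>R w))\<^sup>2 = (norm e)\<^sup>2 + 2 * t * inner e w + t\<^sup>2 * (norm w)\<^sup>2"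
    unfolding power2_norm_eq_inner by (simp add: inner_add inner_commute algebra_simps power2_eq_square)
  moreover have "0 \<le> t\<^sup>2 * (norm w)\<^sup>2" by simp
  ultimately show ?thesis by linarith
qed

theorem lemma8:
  fixes A :: "'n::finite \<Rightarrow> 'n \<Rightarrow> real"
    and blk :: "'k::finite \<Rightarrow> 'n"
    and Om :: "'n \<Rightarrow> (real^'k) set"
    and U :: "'n \<Rightarrow> (real^'k) set"
    and fi :: "'n \<Rightarrow> real^'k \<Rightarrow> real"
    and Wc :: "'k \<Rightarrow> real^'m::finite"
    and d :: "real^'m^'n"
    and d0 :: "real^'m"
    and F :: "(real^'k) \<times> (real^'m^'n) \<times> (real^'m^'n) \<Rightarrow> ((real^'k) \<times> (real^'m^'n) \<times> (real^'m^'n)) set"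
    and V :: "(real^'k) \<times> (real^'m^'n) \<times> (real^'m^'n) \<Rightarrow> real"
    and xs :: "real^'k" and ls zs :: "real^'m^'n"
    and x :: "real^'k" and l z :: "real^'m^'n"
    and a :: real
  defines "L \<equiv> kron_I (laplacian A)"
    and "Omega \<equiv> {y. \<forall>i. blk_proj blk i y \<in> Om i}"
    and "f \<equiv> (\<lambda>y. \<Sum>i\<in>UNIV. fi i (blk_proj blk i y))"
    and "D \<equiv> {y. \<forall>i. blk_proj blk i y \<in> U i}"
  assumes sym: "\<And>i j. A i j = A j i"
    and nonneg: "\<And>i j. 0 \<le> A i j"
    and conn: "connected_weighted_graph A"
    and blk_surj: "surj blk"
    and Om_sub: "\<And>i. Om i \<subseteq> block_space blk i"
    and Om_closed: "\<And>i. closed (Om i)"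
    and Om_convex: "\<And>i. convex (Om i)"
    and U_open: "\<And>i. open (U i)"
    and U_convex: "\<And>i. convex (U i)"
    and Om_U: "\<And>i. Om i \<subseteq> U i"
    and f_strict: "\<And>i. strictly_convex_on (U i \<inter> block_space blk i) (fi i)"
    and d_sum: "(\<Sum>i\<in>UNIV. d $ i) = d0"
    and slater: "\<exists>y\<in>rel_interior Omega. W_mul Wc y = d0"
    and F_eq: "\<And>y u w. F (y, u, w) =
        {(p, d - Wbar_mul blk Wc y - L u - L w - Wbar_mul blk Wc p, L u) | p g.
           g \<in> convex_subdiff D f y \<and>
           p = closest_point Omega (y - g + WbarT_mul blk Wc u) - y}"
    and F_convex: "\<And>y u w. y \<in> Omega \<Longrightarrow> convex (F (y, u, w))"
    and eq_mem: "xs \<in> Omega"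
    and equilibrium: "0 \<in> F (xs, ls, zs)"
    and V_eq: "\<And>y u w. V (y, u, w) =
        f y - f xs + inner ls (d - Wbar_mul blk Wc y)
        + (1/2) * (norm (y - xs))\<^sup>2 + (1/2) * (norm (u - ls))\<^sup>2 + (1/2) * (norm (w - zs))\<^sup>2"
    and x_mem: "x \<in> Omega"
    and a_mem: "a \<in> set_lie_deriv F V (x, l, z)"
  shows "\<exists>gx\<in>convex_subdiff D f x. \<exists>gs\<in>convex_subdiff D f xs.
           (let p = closest_point Omega (x - gx + WbarT_mul blk Wc l) - x in
              a \<le> - (norm p)\<^sup>2 - inner (x - xs) (gx - gs) - inner l (L l)
              \<and> - (norm p)\<^sup>2 - inner (x - xs) (gx - gs) - inner l (L l) \<le> 0)"
proof -
  define W where "W = Wbar_mul blk Wc"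
  define Wt where "Wt = WbarT_mul blk Wc"
  have adj: "\<And>y u. inner u (W y) = inner (Wt u) y"
    unfolding W_def Wt_def using Wbar_adj by (metis inner_commute)
  have Lsym: "\<And>u w. inner u (L w) = inner w (L u)"
    unfolding L_def using lap_sym[of A] sym by metis
  have Lpsd: "\<And>u. 0 \<le> inner u (L u)"
    unfolding L_def using lap_psd[of A] sym nonneg by metis
  have W0: "W 0 = 0" by (simp add: W_def Wbar_mul_def vec_eq_iff)
  have Om_eq: "Omega = (\<Inter>i. blk_proj blk i -` Om i)" unfolding Omega_def by auto
  have clO: "closed Omega" unfolding Om_eq
    by (intro closed_INT ballI continuous_closed_vimage Om_closed blk_proj_cont)
  have cvO: "convex Omega" unfolding Om_eq
    by (intro convex_INT ballI convex_linear_vimage Om_convex blk_proj_linear)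
  have neO: "Omega \<noteq> {}" using x_mem by auto
  have D_eq: "D = (\<Inter>i\<in>UNIV. blk_proj blk i -` U i)" unfolding D_def by auto
  have opD: "open D" unfolding D_eq
    by (rule open_INT) (auto intro!: continuous_open_vimage U_open blk_proj_cont)
  have OD: "Omega \<subseteq> D" unfolding Omega_def D_def using Om_U by blast
  from equilibrium obtain ps gs where eq0: "(0::(real^'k) \<times> (real^'m^'n) \<times> (real^'m^'n)) =
      (ps, d - Wbar_mul blk Wc xs - L ls - L zs - Wbar_mul blk Wc ps, L ls)"
    and gs: "gs \<in> convex_subdiff D f xs"
    and ps: "ps = closest_point Omega (xs - gs + WbarT_mul blk Wc ls) - xs"
    unfolding F_eq by blast
  have ps0: "ps = 0" using eq0 by (simp add: zero_prod_def)
  have Lls: "L ls = 0" using eq0 by (simp add: zero_prod_def)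
  have dE: "d = W xs + L zs" using eq0 ps0 Lls W0 by (simp add: zero_prod_def W_def algebra_simps)
  have cps: "closest_point Omega (xs - gs + Wt ls) = xs" using ps ps0 by (simp add: Wt_def)
  from a_mem obtain v where vF: "v \<in> F (x, l, z)"
    and va: "\<forall>\<zeta>\<in>clarke_grad V (x, l, z). inner \<zeta> v = a"
    unfolding set_lie_deriv_def by blast
  from vF obtain p g where v: "v = (p, d - W x - L l - L z - W p, L l)"
    and g: "g \<in> convex_subdiff D f x"
    and p: "p = closest_point Omega (x - g + Wt l) - x"
    unfolding F_eq W_def Wt_def by blast
  define \<zeta> where "\<zeta> = (g - Wt ls + (x - xs), l - ls, z - zs)"
  have Vlin: "\<And>y. inner ls (d - Wbar_mul blk Wc y) = inner ls d - inner (Wt ls) y"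
    using adj by (simp add: W_def inner_diff_right)
  have "\<zeta> \<in> clarke_grad V (x, l, z)"
    unfolding clarke_grad_def
  proof (intro CollectI allI)
    fix w :: "(real^'k) \<times> (real^'m^'n) \<times> (real^'m^'n)"
    obtain w1 w2 w3 where w: "w = (w1, w2, w3)" by (cases w) auto
    have "x \<in> D" using x_mem OD by auto
    have tl: "((\<lambda>t. x + t *\<^sub>R w1) \<longlongrightarrow> x) (at_right (0::real))"
      by (intro tendsto_eq_intros) (auto intro!: tendsto_eq_intros)
    have evD: "\<forall>\<^sub>F t in at_right (0::real). x + t *\<^sub>R w1 \<in> D"
      using topological_tendstoD[OF tl opD \<open>x \<in> D\<close>] .
    have evP: "\<forall>\<^sub>F t in at_right (0::real). 0 < t"
      by (simp add: eventually_at_right_less)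
    have "\<forall>\<^sub>F t in at_right (0::real). inner \<zeta> w \<le> (V ((x, l, z) + t *\<^sub>R w) - V (x, l, z)) / t"
      using evD evP
    proof eventually_elim
      case (elim t)
      have sub: "f x + inner g ((x + t *\<^sub>R w1) - x) \<le> f (x + t *\<^sub>R w1)"
        using g elim(1) unfolding convex_subdiff_def by blast
      have q1: "t * inner (x - xs) w1 \<le> (1/2) * (norm (x + t *\<^sub>R w1 - xs))\<^sup>2 - (1/2) * (norm (x - xs))\<^sup>2"
        using sq_norm_step[of t "x - xs" w1] by (simp add: algebra_simps)
      have q2: "t * inner (l - ls) w2 \<le> (1/2) * (norm (l + t *\<^sub>R w2 - ls))\<^sup>2 - (1/2) * (norm (l - ls))\<^sup>2"
        using sq_norm_step[of t "l - ls" w2] by (simp add: algebra_simps)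
      have q3: "t * inner (z - zs) w3 \<le> (1/2) * (norm (z + t *\<^sub>R w3 - zs))\<^sup>2 - (1/2) * (norm (z - zs))\<^sup>2"
        using sq_norm_step[of t "z - zs" w3] by (simp add: algebra_simps)
      have lin: "inner ls (Wbar_mul blk Wc (x + t *\<^sub>R w1)) = inner ls (Wbar_mul blk Wc x) + t * inner (Wt ls) w1"
        using adj[of ls "x + t *\<^sub>R w1"] adj[of ls x] by (simp add: W_def inner_add_right)
      have "t * inner \<zeta> w \<le> V ((x, l, z) + t *\<^sub>R w) - V (x, l, z)"
        using sub q1 q2 q3 lin
        by (simp add: w \<zeta>_def V_eq Vlin inner_diff_left inner_add_left algebra_simps)
      then show ?case using elim(2) by (simp add: pos_le_divide_eq mult.commute)
    qed
    then show "ereal (inner \<zeta> w) \<le> clarke_dir_deriv V (x, l, z) w"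
      by (rule clarke_lower)
  qed
  then have aE: "a = inner \<zeta> v" using va by auto
  have xpO: "x + p \<in> Omega" using p closest_point_in_set[OF clO neO] by simp
  have P1: "inner ((x - g + Wt l) - (x + p)) (xs - (x + p)) \<le> 0"
    using closest_point_dot[OF cvO clO eq_mem, of "x - g + Wt l"] p by simp
  have P2: "inner ((xs - gs + Wt ls) - xs) (x - xs) \<le> 0"
    using closest_point_dot[OF cvO clO x_mem, of "xs - gs + Wt ls"] cps by simp
  have s1: "inner (l - ls) (W xs) = inner (Wt l) xs - inner (Wt ls) xs" by (subst inner_diff_left) (simp only: adj)
  have s2: "inner (l - ls) (W x) = inner (Wt l) x - inner (Wt ls) x" by (subst inner_diff_left) (simp only: adj)
  have s3: "inner (l - ls) (W p) = inner (Wt l) p - inner (Wt ls) p" by (subst inner_diff_left) (simp only: adj)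
  have s4: "inner (l - ls) (L zs) = inner zs (L l)" using Lsym[of ls zs] Lsym[of l zs] Lls by (simp add: inner_diff_left)
  have s5: "inner (l - ls) (L l) = inner l (L l)" using Lsym[of ls l] Lls by (simp add: inner_diff_left)
  have s6: "inner (l - ls) (L z) = inner z (L l)" using Lsym[of ls z] Lsym[of l z] Lls by (simp add: inner_diff_left)
  have aval: "a = inner (g - Wt ls + (x - xs)) p + inner (l - ls) (d - W x - L l - L z - W p) + inner (z - zs) (L l)"
    using aE by (simp add: \<zeta>_def v)
  have main: "a \<le> - (norm p)\<^sup>2 - inner (x - xs) (g - gs) - inner l (L l)"
  proof -
    have "inner (l - ls) (d - W x - L l - L z - W p) =
        inner (l - ls) (W xs) + inner (l - ls) (L zs) - inner (l - ls) (W x) - inner (l - ls) (L l)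
        - inner (l - ls) (L z) - inner (l - ls) (W p)"
      by (simp add: dE inner_diff_right inner_add_right)
    then have "a = inner (g - Wt ls + (x - xs)) p + (inner (Wt l) xs - inner (Wt ls) xs) + inner zs (L l)
        - (inner (Wt l) x - inner (Wt ls) x) - inner l (L l) - inner z (L l) - (inner (Wt l) p - inner (Wt ls) p)
        + inner (z - zs) (L l)"
      using aval s1 s2 s3 s4 s5 s6 by simp
    then show ?thesis using P1 P2
      by (simp add: inner_diff_left inner_diff_right inner_add_left inner_add_right inner_commute
          power2_norm_eq_inner algebra_simps)
  qed
  have mono: "0 \<le> inner (x - xs) (g - gs)"
  proof -
    have "f x + inner g (xs - x) \<le> f xs" using g eq_mem OD unfolding convex_subdiff_def by blast
    moreover have "f xs + inner gs (x - xs) \<le> f x" using gs x_mem OD unfolding convex_subdiff_def by blast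
    ultimately show ?thesis by (simp add: inner_diff_left inner_diff_right inner_commute)
  qed
  have pe: "closest_point Omega (x - g + WbarT_mul blk Wc l) - x = p" using p by (simp add: Wt_def)
  have n0: "0 \<le> (norm p)\<^sup>2" by simp
  show ?thesis
  proof (rule bexI[OF _ g], rule bexI[OF _ gs])
    show "let p = closest_point Omega (x - g + WbarT_mul blk Wc l) - x in
              a \<le> - (norm p)\<^sup>2 - inner (x - xs) (g - gs) - inner l (L l)
              \<and> - (norm p)\<^sup>2 - inner (x - xs) (g - gs) - inner l (L l) \<le> 0"
      unfolding Let_def pe using main mono Lpsd[of l] n0 by linarith
  qed
qed

end
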